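(* Let $(X,m)$ be a configuration of particles with $X=\{x_1,\ldots,x_n\}\subset\mathbb{R}^N$ distinct points, nonzero masses $m_i$, total mass $\mu_0=\sum_i m_i\neq0$, and exponent $a\in\mathbb{R}\setminus\{0\}$. Then $(X,m)$ is a central configuration if and only if there exists $\lambda\in\mathbb{R}$ such that, with $S_{ij}=s_{ij}^a-\lambda/\mu_0$, each weighted system $(X,C_j)$, $j=1,\ldots,n$, defined by $C_j(x_i)=m_iS_{ij}$ for $i\neq j$ and $C_j(x_j)=-\sum_{i\neq j}m_iS_{ij}$, has identically zero first moment.
   Context: $s_{ij}=\overrightarrow{x_ix_j}^2$. The accelerations are $\overrightarrow{\gamma}_j=-\sum_{i\neq j}m_is_{ij}^a\overrightarrow{x_ix_j}$. $(X,m)$ is a central configuration if there exist a vector $\overrightarrow{\gamma}_O$, a point $x_O$ and a real number $\lambda$ with $\overrightarrow{\gamma}_j-\overrightarrow{\gamma}_O=\lambda\overrightarrow{x_Ox_j}$ for all $j$. The first moment of a weighted system $(X,w)$ is $\mu_1(p)=\sum_iw(x_i)\overrightarrow{px_i}$. *)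

theory Defs
  imports "HOL-Analysis.Analysis"
begin

text \<open>A configuration of n particles: positions x i and masses m i, for i < n.
  s_ij = |x_j - x_i|^2 (squared distance).\<close>

definition sqd :: "(nat \<Rightarrow> 'a::euclidean_space) \<Rightarrow> nat \<Rightarrow> nat \<Rightarrow> real" where
  "sqd x i j = (norm (x j - x i))\<^sup>2"

definition accel :: "nat \<Rightarrow> (nat \<Rightarrow> 'a::euclidean_space) \<Rightarrow> (nat \<Rightarrow> real) \<Rightarrow> real \<Rightarrow> nat \<Rightarrow> 'a" where
  "accel n x m a j = - (\<Sum>i\<in>{..<n} - {j}. (m i * (sqd x i j powr a)) *\<^sub>R (x j - x i))"

definition central_config :: "nat \<Rightarrow> (nat \<Rightarrow> 'a::euclidean_space) \<Rightarrow> (nat \<Rightarrow> real) \<Rightarrow> real \<Rightarrow> bool" where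
  "central_config n x m a \<longleftrightarrow>
     (\<exists>gO xO (l::real). \<forall>j<n. accel n x m a j - gO = l *\<^sub>R (x j - xO))"

definition first_moment :: "nat \<Rightarrow> (nat \<Rightarrow> 'a::euclidean_space) \<Rightarrow> (nat \<Rightarrow> real) \<Rightarrow> 'a \<Rightarrow> 'a" where
  "first_moment n x w p = (\<Sum>i<n. w i *\<^sub>R (x i - p))"

definition Cweight :: "nat \<Rightarrow> (nat \<Rightarrow> 'a::euclidean_space) \<Rightarrow> (nat \<Rightarrow> real) \<Rightarrow> real \<Rightarrow> real \<Rightarrow> nat \<Rightarrow> nat \<Rightarrow> real" where
  "Cweight n x m a l j i =
     (let S = (\<lambda>k. sqd x k j powr a - l / (\<Sum>k<n. m k)) in
      if i \<noteq> j then m i * S i else - (\<Sum>k\<in>{..<n} - {j}. m k * S k))"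

end

theory Submission
  imports Defs
begin

lemma sqd_sym: "sqd x i j = sqd x j i"
  unfolding sqd_def by (simp add: norm_minus_commute)

lemma accel_alt:
  "accel n x m a j = (\<Sum>i<n. (m i * (sqd x i j powr a)) *\<^sub>R (x i - x j))"
proof -
  have "accel n x m a j = (\<Sum>i\<in>{..<n} - {j}. (m i * (sqd x i j powr a)) *\<^sub>R (x i - x j))"
    unfolding accel_def by (simp add: sum_negf[symmetric] scaleR_diff_right)
  also have "\<dots> = (\<Sum>i<n. (m i * (sqd x i j powr a)) *\<^sub>R (x i - x j))"
    by (rule sum.mono_neutral_left) auto
  finally show ?thesis .
qed

lemma accel_balance:
  "(\<Sum>j<n. m j *\<^sub>R accel n x m a j) = 0"
proof -
  define F where "F i j = (m j * m i * (sqd x i j powr a)) *\<^sub>R (x i - x j)" for i j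
  have anti: "F i j = - F j i" for i j
    unfolding F_def by (simp add: sqd_sym[of x i j] mult.commute mult.left_commute)
       (simp add: scaleR_diff_right)
  define B where "B = (\<Sum>j<n. \<Sum>i<n. F i j)"
  have e1: "(\<Sum>j<n. m j *\<^sub>R accel n x m a j) = B"
    unfolding accel_alt F_def B_def by (simp add: scaleR_sum_right mult.assoc)
  have h1: "B = (\<Sum>i<n. \<Sum>j<n. F i j)"
    unfolding B_def by (rule sum.swap)
  have h2: "(\<Sum>i<n. \<Sum>j<n. F i j) = - B"
  proof -
    have "(\<Sum>i<n. \<Sum>j<n. F i j) = (\<Sum>i<n. \<Sum>j<n. - F j i)"
      by (intro sum.cong refl) (rule anti)
    thus ?thesis unfolding B_def by (simp only: sum_negf)
  qed
  have "B = - B" using h1 h2 by (rule trans)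
  hence "B + B = 0" by (simp only: eq_neg_iff_add_eq_0)
  hence "(2::real) *\<^sub>R B = 0" by (simp only: scaleR_2)
  hence "B = 0" by simp
  thus ?thesis using e1 by simp
qed

lemma fm_eq:
  fixes x :: "nat \<Rightarrow> 'a::euclidean_space"
  assumes j: "j < n" and M: "(\<Sum>i<n. m i) \<noteq> 0"
  defines "M \<equiv> (\<Sum>i<n. m i)"
  defines "c \<equiv> (1 / M) *\<^sub>R (\<Sum>i<n. m i *\<^sub>R x i)"
  shows "first_moment n x (Cweight n x m a l j) p = accel n x m a j - l *\<^sub>R (c - x j)"
proof -
  define w where "w = Cweight n x m a l j"
  define S where "S k = sqd x k j powr a - l / M" for k
  have wsum: "(\<Sum>i<n. w i) = 0"
  proof -
    have "(\<Sum>i<n. w i) = w j + (\<Sum>i\<in>{..<n} - {j}. w i)"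
      using j by (simp add: sum.remove)
    also have "(\<Sum>i\<in>{..<n} - {j}. w i) = (\<Sum>i\<in>{..<n} - {j}. m i * S i)"
      by (rule sum.cong) (auto simp: w_def Cweight_def S_def M_def)
    finally show ?thesis by (simp add: w_def Cweight_def S_def M_def)
  qed
  have "first_moment n x w p = (\<Sum>i<n. w i *\<^sub>R (x i - x j)) + (\<Sum>i<n. w i) *\<^sub>R (x j - p)"
    unfolding first_moment_def scaleR_sum_left sum.distrib[symmetric]
    by (rule sum.cong) (auto simp: algebra_simps)
  also have "\<dots> = (\<Sum>i<n. w i *\<^sub>R (x i - x j))" using wsum by simp
  also have "\<dots> = (\<Sum>i<n. (m i * S i) *\<^sub>R (x i - x j))"
    by (rule sum.cong) (auto simp: w_def Cweight_def S_def M_def)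
  also have "\<dots> = (\<Sum>i<n. (m i * (sqd x i j powr a)) *\<^sub>R (x i - x j))
        - (l / M) *\<^sub>R (\<Sum>i<n. m i *\<^sub>R (x i - x j))"
    unfolding scaleR_sum_right sum_subtractf[symmetric]
    by (rule sum.cong) (auto simp: S_def algebra_simps)
  also have "(\<Sum>i<n. m i *\<^sub>R (x i - x j)) = M *\<^sub>R (c - x j)"
    using M unfolding c_def scaleR_diff_right sum_subtractf M_def[symmetric] scaleR_sum_left[symmetric]
    by simp
  finally show ?thesis using M by (simp add: w_def accel_alt M_def)
qed

theorem theorem5p2:
  fixes n :: nat and x :: "nat \<Rightarrow> 'a::euclidean_space" and m :: "nat \<Rightarrow> real" and a :: real
  assumes "inj_on x {..<n}"
    and "\<forall>i<n. m i \<noteq> 0"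
    and "(\<Sum>i<n. m i) \<noteq> 0"
    and "a \<noteq> 0"
  shows "central_config n x m a \<longleftrightarrow>
         (\<exists>l::real. \<forall>j<n. \<forall>p. first_moment n x (Cweight n x m a l j) p = 0)"
proof -
  define M where "M = (\<Sum>i<n. m i)"
  define c where "c = (1 / M) *\<^sub>R (\<Sum>i<n. m i *\<^sub>R x i)"
  have M: "M \<noteq> 0" using assms(3) M_def by simp
  have fm: "\<And>j l p. j < n \<Longrightarrow> first_moment n x (Cweight n x m a l j) p = accel n x m a j - l *\<^sub>R (c - x j)"
    using fm_eq[OF _ assms(3)] unfolding c_def M_def by blast
  show ?thesis
  proof
    assume "central_config n x m a"
    then obtain gO xO lam where h: "\<forall>j<n. accel n x m a j - gO = lam *\<^sub>R (x j - xO)"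
      unfolding central_config_def by blast
    have acc: "accel n x m a j = gO + lam *\<^sub>R (x j - xO)" if "j < n" for j
      using h that by (metis diff_add_cancel add.commute)
    have "0 = (\<Sum>j<n. m j *\<^sub>R accel n x m a j)" by (simp add: accel_balance)
    also have "\<dots> = (\<Sum>j<n. m j *\<^sub>R gO + lam *\<^sub>R (m j *\<^sub>R x j) - (lam * m j) *\<^sub>R xO)"
      by (rule sum.cong) (auto simp: acc algebra_simps)
    also have "\<dots> = M *\<^sub>R gO + lam *\<^sub>R (\<Sum>j<n. m j *\<^sub>R x j) - (lam * M) *\<^sub>R xO"
      by (simp add: sum.distrib sum_subtractf scaleR_sum_left scaleR_sum_right M_def sum_distrib_left)
    also have "(\<Sum>j<n. m j *\<^sub>R x j) = M *\<^sub>R c" using M by (simp add: c_def)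
    finally have "M *\<^sub>R (gO + lam *\<^sub>R (c - xO)) = 0"
      by (simp add: algebra_simps)
    hence g: "gO = - lam *\<^sub>R (c - xO)" using M by (simp add: eq_neg_iff_add_eq_0)
    show "\<exists>l::real. \<forall>j<n. \<forall>p. first_moment n x (Cweight n x m a l j) p = 0"
    proof (intro exI allI impI)
      fix j p assume j: "j < n"
      show "first_moment n x (Cweight n x m a (- lam) j) p = 0"
        using j by (simp add: fm acc g algebra_simps)
    qed
  next
    assume "\<exists>l::real. \<forall>j<n. \<forall>p. first_moment n x (Cweight n x m a l j) p = 0"
    then obtain l where h: "\<forall>j<n. first_moment n x (Cweight n x m a l j) 0 = 0" by blast
    show "central_config n x m a"
      unfolding central_config_def
    proof (intro exI allI impI)
      fix j assume j: "j < n"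
      have "accel n x m a j = l *\<^sub>R (c - x j)" using h j fm[OF j, of l 0] by simp
      thus "accel n x m a j - 0 = (- l) *\<^sub>R (x j - c)" by (simp add: algebra_simps)
    qed
  qed
qed

end
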